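(* Consider a GND instance, a reply $\varrho$-oracle ($\varrho\ge1$), and a cost sharing mechanism $M$ whose induced GND game admits an $(A,B)$-bounded potential function $\Phi$ and is $(\lambda,\mu)$-smooth with $\mu < 1/(\varrho\epsilon_1^2)$, where $\epsilon_1=\frac{1+\epsilon}{1-\epsilon}$. Let $Q = \frac{2\epsilon_1 N A}{1-\varrho\epsilon_1^2\mu}$ and $T = \lceil Q \cdot \ln(A B N^{\max_j \alpha_j}) \rceil$. Then the output $p^{t^*}$ of Alg-ABRD (run with $M$, the given $\epsilon$-cost shares and this $T$) satisfies $$C(p^{t^*}) \le \frac{2\varrho\epsilon_1^2\lambda}{1-\varrho\epsilon_1^2\mu}\cdot C^*.$$
   Context: GND instance: finite resource set $E$; requests $i \in [N]$, each with a reply collection $P_i \subseteq 2^E$ and a weight vector $w_i \in \mathbb{Z}_{\geq 1}^E$; constants $q \in \mathbb{Z}_{\ge 1}$, $\alpha_1,\dots,\alpha_q > 1$; for each $e$, $\sigma_e \geq 0$ and $\xi_{e,j} \geq 0$ (at least one $\xi_{e,j}>0$), and cost function $F_e(0)=0$, $F_e(l)=\sigma_e+\sum_j \xi_{e,j} l^{\alpha_j}$ for $l>0$. A strategy profile is $p=(p_1,\dots,p_N)\in P = P_1\times\dots\times P_N$; load $l_e^p=\sum_{i: e\in p_i} w_i(e)$; total cost $C(p)=\sum_e F_e(l_e^p)$; $C^*=\min_{p\in P} C(p)$. Notation $p_{-i}$ denotes $p$ without coordinate $i$ and $(p'_i,p_{-i})$ replaces the $i$-th coordinate by $p'_i$.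 A reply $\varrho$-oracle, given a reply collection $R$ and tolls $\tau:E\to\mathbb{R}_{>0}$, returns $r \in R$ with $\sum_{e\in r}\tau(e) \le \varrho \sum_{e \in r'}\tau(e)$ for all $r'\in R$. A cost sharing mechanism (CSM) $M=\{f_{i,e}\}$ assigns cost shares $f_{i,e}(p) \geq 0$ with $\sum_i f_{i,e}(p) = F_e(l_e^p)$; it is separable and uniform: $f_{i,e}(p)=0$ if $e \notin p_i$, and $f_{i,e}(p)$ depends only on $w_i(e)$ and the multiset of weights $w_{i'}(e)$ of the other players $i'$ with $e \in p_{i'}$. Player $i$'s individual cost is $C_i(p)=\sum_e f_{i,e}(p)$. The induced game is $(\lambda,\mu)$-smooth ($\lambda>0$, $0<\mu<1$) if $\sum_i C_i(p'_i,p_{-i}) \le \lambda C(p') + \mu C(p)$ for all $p,p'\in P$. A function $\Phi:P\to\mathbb{R}_{>0}$ is a potential function if $\Phi(p')-\Phi(p)=C_i(p')-C_i(p)$ whenever $p_{-i}=p'_{-i}$; it is $(A,B)$-bounded ($A,B\ge1$) if $\Phi(p)/A \le C(p) \le B\,\Phi(p)$ for all $p$. Alg-ABRD: fix small $\epsilon>0$. Assume values $\widetilde f_{i,e}(p)$ are fixed for all $i,e,p$ with $(1-\epsilon) f_{i,e}(p) \le \widetilde f_{i,e}(p) \le (1+\epsilon) f_{i,e}(p)$, and set $\widetilde C_i(p)=\sum_e \widetilde f_{i,e}(p)$. Initial profile $p^0$: for each $i$, $p^0_i$ is the oracle's output on $P_i$ with tolls $\tau_i^0(e)=F_e(w_i(e))$.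 For $t=1,\dots,T$: for every $i$ compute $p'_i \in P_i$ with $\widetilde C_i(p'_i,p^{t-1}_{-i}) \le \varrho\, \widetilde C_i(p''_i,p^{t-1}_{-i})$ for all $p''_i\in P_i$, and let $\delta_i^t=\widetilde C_i(p^{t-1}) - \epsilon_1 \widetilde C_i(p'_i,p^{t-1}_{-i})$. If $\delta_i^t \le 0$ for all $i$, set $p^t=p^{t-1}$ and stop. Otherwise let $\Delta^t=\sum_i \delta_i^t$, pick $j$ with $\delta_j^t>0$ and $\delta_j^t \ge \Delta^t/N$, and set $p^t=(p'_j,p^{t-1}_{-j})$. Finally output a generated profile $p^{t^*}$ of minimum total cost $C$. *)

theory Defs
  imports "HOL-Analysis.Analysis" "HOL-Library.Multiset"
begin

(* Players are 0..<N; resources have type 'e, the resource set is E.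
   A strategy profile is an extensional function p :: nat => 'e set
   in  Pi\<^sub>E {..<N} P  (p i = undefined for i >= N). *)

type_synonym 'e profile = "nat \<Rightarrow> 'e set"

definition profiles :: "nat \<Rightarrow> (nat \<Rightarrow> 'e set set) \<Rightarrow> 'e profile set" where
  "profiles N P = Pi\<^sub>E {..<N} P"

definition costF :: "('e \<Rightarrow> real) \<Rightarrow> ('e \<Rightarrow> nat \<Rightarrow> real) \<Rightarrow> (nat \<Rightarrow> real) \<Rightarrow> nat
                      \<Rightarrow> 'e \<Rightarrow> nat \<Rightarrow> real" where
  "costF \<sigma> \<xi> \<alpha> q e l = (if l = 0 then 0 else \<sigma> e + (\<Sum>j<q. \<xi> e j * real l powr \<alpha> j))"

definition gnd_instance ::
  "'e set \<Rightarrow> nat \<Rightarrow> (nat \<Rightarrow> 'e set set) \<Rightarrow> (nat \<Rightarrow> 'e \<Rightarrow> nat) \<Rightarrow> nat \<Rightarrow> (nat \<Rightarrow> real)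
   \<Rightarrow> ('e \<Rightarrow> real) \<Rightarrow> ('e \<Rightarrow> nat \<Rightarrow> real) \<Rightarrow> bool" where
  "gnd_instance E N P w q \<alpha> \<sigma> \<xi> \<longleftrightarrow>
     finite E \<and> N \<ge> 1 \<and> q \<ge> 1 \<and>
     (\<forall>i<N. P i \<subseteq> Pow E \<and> P i \<noteq> {}) \<and>
     (\<forall>i<N. \<forall>e\<in>E. w i e \<ge> 1) \<and>
     (\<forall>j<q. \<alpha> j > 1) \<and>
     (\<forall>e\<in>E. \<sigma> e \<ge> 0 \<and> (\<forall>j<q. \<xi> e j \<ge> 0) \<and> (\<exists>j<q. \<xi> e j > 0))"

definition load :: "nat \<Rightarrow> (nat \<Rightarrow> 'e \<Rightarrow> nat) \<Rightarrow> 'e profile \<Rightarrow> 'e \<Rightarrow> nat" where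
  "load N w p e = (\<Sum>i\<in>{i. i < N \<and> e \<in> p i}. w i e)"

definition total_cost :: "'e set \<Rightarrow> ('e \<Rightarrow> nat \<Rightarrow> real) \<Rightarrow> nat \<Rightarrow> (nat \<Rightarrow> 'e \<Rightarrow> nat)
                           \<Rightarrow> 'e profile \<Rightarrow> real" where
  "total_cost E F N w p = (\<Sum>e\<in>E. F e (load N w p e))"

definition opt_cost :: "'e set \<Rightarrow> ('e \<Rightarrow> nat \<Rightarrow> real) \<Rightarrow> nat \<Rightarrow> (nat \<Rightarrow> 'e set set)
                         \<Rightarrow> (nat \<Rightarrow> 'e \<Rightarrow> nat) \<Rightarrow> real" where
  "opt_cost E F N P w = Min (total_cost E F N w ` profiles N P)"

definition reply_rho_orc :: "'e set \<Rightarrow> nat \<Rightarrow> (nat \<Rightarrow> 'e set set) \<Rightarrow> real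
                             \<Rightarrow> ('e set set \<Rightarrow> ('e \<Rightarrow> real) \<Rightarrow> 'e set) \<Rightarrow> bool" where
  "reply_rho_orc E N P \<rho> orc \<longleftrightarrow>
     (\<forall>i<N. \<forall>\<tau>. (\<forall>e\<in>E. \<tau> e > 0) \<longrightarrow>
        orc (P i) \<tau> \<in> P i \<and> (\<forall>r'\<in>P i. sum \<tau> (orc (P i) \<tau>) \<le> \<rho> * sum \<tau> r'))"

definition others_weights :: "nat \<Rightarrow> (nat \<Rightarrow> 'e \<Rightarrow> nat) \<Rightarrow> 'e profile \<Rightarrow> nat \<Rightarrow> 'e \<Rightarrow> nat multiset" where
  "others_weights N w p i e = image_mset (\<lambda>k. w k e) (mset_set {k. k < N \<and> k \<noteq> i \<and> e \<in> p k})"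

definition is_csm :: "'e set \<Rightarrow> ('e \<Rightarrow> nat \<Rightarrow> real) \<Rightarrow> nat \<Rightarrow> (nat \<Rightarrow> 'e set set)
                       \<Rightarrow> (nat \<Rightarrow> 'e \<Rightarrow> nat) \<Rightarrow> (nat \<Rightarrow> 'e \<Rightarrow> 'e profile \<Rightarrow> real) \<Rightarrow> bool" where
  "is_csm E F N P w f \<longleftrightarrow>
     (\<forall>p\<in>profiles N P. \<forall>e\<in>E.
        (\<forall>i<N. f i e p \<ge> 0 \<and> (e \<notin> p i \<longrightarrow> f i e p = 0)) \<and>
        (\<Sum>i<N. f i e p) = F e (load N w p e)) \<and>
     (\<forall>p\<in>profiles N P. \<forall>p'\<in>profiles N P. \<forall>i<N. \<forall>i'<N. \<forall>e\<in>E.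
        e \<in> p i \<longrightarrow> e \<in> p' i' \<longrightarrow> w i e = w i' e \<longrightarrow>
        others_weights N w p i e = others_weights N w p' i' e \<longrightarrow> f i e p = f i' e p')"

definition indiv_cost :: "'e set \<Rightarrow> (nat \<Rightarrow> 'e \<Rightarrow> 'e profile \<Rightarrow> real) \<Rightarrow> nat \<Rightarrow> 'e profile \<Rightarrow> real" where
  "indiv_cost E f i p = (\<Sum>e\<in>E. f i e p)"

definition smooth_game :: "'e set \<Rightarrow> ('e \<Rightarrow> nat \<Rightarrow> real) \<Rightarrow> nat \<Rightarrow> (nat \<Rightarrow> 'e set set)
    \<Rightarrow> (nat \<Rightarrow> 'e \<Rightarrow> nat) \<Rightarrow> (nat \<Rightarrow> 'e \<Rightarrow> 'e profile \<Rightarrow> real) \<Rightarrow> real \<Rightarrow> real \<Rightarrow> bool" where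
  "smooth_game E F N P w f lam \<mu> \<longleftrightarrow> lam > 0 \<and> 0 < \<mu> \<and> \<mu> < 1 \<and>
     (\<forall>p\<in>profiles N P. \<forall>p'\<in>profiles N P.
        (\<Sum>i<N. indiv_cost E f i (p(i := p' i)))
          \<le> lam * total_cost E F N w p' + \<mu> * total_cost E F N w p)"

definition potential_fun :: "'e set \<Rightarrow> nat \<Rightarrow> (nat \<Rightarrow> 'e set set)
    \<Rightarrow> (nat \<Rightarrow> 'e \<Rightarrow> 'e profile \<Rightarrow> real) \<Rightarrow> ('e profile \<Rightarrow> real) \<Rightarrow> bool" where
  "potential_fun E N P f \<Phi> \<longleftrightarrow>
     (\<forall>p\<in>profiles N P. \<Phi> p > 0) \<and>
     (\<forall>p\<in>profiles N P. \<forall>p'\<in>profiles N P. \<forall>i<N.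
        (\<forall>k<N. k \<noteq> i \<longrightarrow> p' k = p k) \<longrightarrow>
        \<Phi> p' - \<Phi> p = indiv_cost E f i p' - indiv_cost E f i p)"

definition bounded_potential :: "'e set \<Rightarrow> ('e \<Rightarrow> nat \<Rightarrow> real) \<Rightarrow> nat \<Rightarrow> (nat \<Rightarrow> 'e set set)
    \<Rightarrow> (nat \<Rightarrow> 'e \<Rightarrow> nat) \<Rightarrow> ('e profile \<Rightarrow> real) \<Rightarrow> real \<Rightarrow> real \<Rightarrow> bool" where
  "bounded_potential E F N P w \<Phi> A B \<longleftrightarrow> A \<ge> 1 \<and> B \<ge> 1 \<and>
     (\<forall>p\<in>profiles N P. \<Phi> p / A \<le> total_cost E F N w p \<and> total_cost E F N w p \<le> B * \<Phi> p)"

definition approx_shares :: "'e set \<Rightarrow> nat \<Rightarrow> (nat \<Rightarrow> 'e set set) \<Rightarrow> real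
    \<Rightarrow> (nat \<Rightarrow> 'e \<Rightarrow> 'e profile \<Rightarrow> real) \<Rightarrow> (nat \<Rightarrow> 'e \<Rightarrow> 'e profile \<Rightarrow> real) \<Rightarrow> bool" where
  "approx_shares E N P \<epsilon> f ft \<longleftrightarrow>
     (\<forall>p\<in>profiles N P. \<forall>i<N. \<forall>e\<in>E.
        (1 - \<epsilon>) * f i e p \<le> ft i e p \<and> ft i e p \<le> (1 + \<epsilon>) * f i e p)"

(* One iteration t of Alg-ABRD from profile p to profile p'; stop = True iff the
   stopping branch was taken.  The replies br i are the computed p'_i. *)
definition abrd_step :: "'e set \<Rightarrow> nat \<Rightarrow> (nat \<Rightarrow> 'e set set) \<Rightarrow> real \<Rightarrow> real
    \<Rightarrow> (nat \<Rightarrow> 'e \<Rightarrow> 'e profile \<Rightarrow> real) \<Rightarrow> 'e profile \<Rightarrow> 'e profile \<Rightarrow> bool \<Rightarrow> bool" where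
  "abrd_step E N P \<rho> \<epsilon>\<^sub>1 ft p p' stop \<longleftrightarrow>
     (\<exists>br. (\<forall>i<N. br i \<in> P i \<and>
              (\<forall>r\<in>P i. indiv_cost E ft i (p(i := br i)) \<le> \<rho> * indiv_cost E ft i (p(i := r)))) \<and>
        (let \<delta> = (\<lambda>i. indiv_cost E ft i p - \<epsilon>\<^sub>1 * indiv_cost E ft i (p(i := br i))) in
          (if (\<forall>i<N. \<delta> i \<le> 0) then p' = p \<and> stop
           else \<not> stop \<and>
             (\<exists>j<N. \<delta> j > 0 \<and> \<delta> j \<ge> (\<Sum>i<N. \<delta> i) / real N \<and> p' = p(j := br j)))))"

definition abrd_run :: "'e set \<Rightarrow> nat \<Rightarrow> (nat \<Rightarrow> 'e set set) \<Rightarrow> (nat \<Rightarrow> 'e \<Rightarrow> nat)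
    \<Rightarrow> ('e \<Rightarrow> nat \<Rightarrow> real) \<Rightarrow> ('e set set \<Rightarrow> ('e \<Rightarrow> real) \<Rightarrow> 'e set) \<Rightarrow> real \<Rightarrow> real
    \<Rightarrow> (nat \<Rightarrow> 'e \<Rightarrow> 'e profile \<Rightarrow> real) \<Rightarrow> nat \<Rightarrow> (nat \<Rightarrow> 'e profile) \<Rightarrow> nat \<Rightarrow> bool" where
  "abrd_run E N P w F orc \<rho> \<epsilon>\<^sub>1 ft T ps tstop \<longleftrightarrow>
     ps 0 = (\<lambda>i\<in>{..<N}. orc (P i) (\<lambda>e. F e (w i e))) \<and>
     tstop \<le> T \<and>
     (\<forall>t\<in>{1..tstop}. \<exists>stop. abrd_step E N P \<rho> \<epsilon>\<^sub>1 ft (ps (t - 1)) (ps t) stop \<and>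
         (stop \<longrightarrow> t = tstop) \<and> (t = tstop \<and> tstop < T \<longrightarrow> stop)) \<and>
     (tstop < T \<longrightarrow> tstop \<ge> 1)"

definition abrd_output :: "'e set \<Rightarrow> ('e \<Rightarrow> nat \<Rightarrow> real) \<Rightarrow> nat \<Rightarrow> (nat \<Rightarrow> 'e \<Rightarrow> nat)
    \<Rightarrow> (nat \<Rightarrow> 'e profile) \<Rightarrow> nat \<Rightarrow> nat \<Rightarrow> bool" where
  "abrd_output E F N w ps tstop tout \<longleftrightarrow> tout \<le> tstop \<and>
     (\<forall>t\<le>tstop. total_cost E F N w (ps tout) \<le> total_cost E F N w (ps t))"

end

theory Submission
  imports Defs
begin

lemma power_mean_aux:
  fixes x :: "nat \<Rightarrow> real"
  assumes S: "finite S" "S \<noteq> {}" and x: "\<And>i. i \<in> S \<Longrightarrow> x i > 0" and a: "a \<ge> 1"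
  shows "(\<Sum>i\<in>S. x i) powr a \<le> real (card S) powr (a - 1) * (\<Sum>i\<in>S. x i powr a)"
proof -
  define k where "k = real (card S)"
  have k: "k > 0" using S by (simp add: k_def card_gt_0_iff)
  have "(\<Sum>i\<in>S. (1/k) *\<^sub>R x i) powr a \<le> (\<Sum>i\<in>S. (1/k) * x i powr a)"
    by (rule convex_on_sum[OF S powr_convex[OF a]]) (use x k in \<open>auto simp: k_def\<close>)
  hence "((\<Sum>i\<in>S. x i) / k) powr a \<le> (\<Sum>i\<in>S. x i powr a) / k"
    by (simp add: sum_divide_distrib[symmetric] sum_distrib_left[symmetric] divide_inverse mult.commute)
  hence "(\<Sum>i\<in>S. x i) powr a / k powr a \<le> (\<Sum>i\<in>S. x i powr a) / k"
    using x by (simp add: powr_divide sum_nonneg less_imp_le)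
  hence "(\<Sum>i\<in>S. x i) powr a \<le> (\<Sum>i\<in>S. x i powr a) / k * k powr a"
    using k by (simp add: divide_le_eq)
  also have "\<dots> = k powr (a - 1) * (\<Sum>i\<in>S. x i powr a)"
    using k by (simp add: powr_diff)
  finally show ?thesis by (simp add: k_def)
qed


lemma sum_swap_users:
  fixes g :: "nat \<Rightarrow> 'e \<Rightarrow> 'b::comm_monoid_add"
  assumes "finite E" "\<And>i. i < N \<Longrightarrow> p i \<subseteq> E"
  shows "(\<Sum>e\<in>E. \<Sum>i\<in>{i. i < N \<and> e \<in> p i}. g i e) = (\<Sum>i<N. \<Sum>e\<in>p i. g i e)"
proof -
  have "(\<Sum>e\<in>E. \<Sum>i\<in>{i. i < N \<and> e \<in> p i}. g i e) = (\<Sum>e\<in>E. \<Sum>i<N. if e \<in> p i then g i e else 0)"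
    by (intro sum.cong refl sum.mono_neutral_cong_left) auto
  also have "\<dots> = (\<Sum>i<N. \<Sum>e\<in>E. if e \<in> p i then g i e else 0)" by (rule sum.swap)
  also have "\<dots> = (\<Sum>i<N. \<Sum>e\<in>p i. g i e)"
  proof (rule sum.cong[OF refl])
    fix i assume "i \<in> {..<N}"
    hence "p i \<subseteq> E" using assms(2) by auto
    thus "(\<Sum>e\<in>E. if e \<in> p i then g i e else 0) = (\<Sum>e\<in>p i. g i e)"
      using assms(1) by (intro sum.mono_neutral_cong_right) auto
  qed
  finally show ?thesis .
qed

lemma prof_upd: "p \<in> profiles N P \<Longrightarrow> i < N \<Longrightarrow> r \<in> P i \<Longrightarrow> p(i := r) \<in> profiles N P"
  unfolding profiles_def by (metis PiE_fun_upd insert_absorb lessThan_iff)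



theorem theorem5p3:
  fixes E :: "'e set" and N :: nat and P :: "nat \<Rightarrow> 'e set set" and w :: "nat \<Rightarrow> 'e \<Rightarrow> nat"
    and q :: nat and \<alpha> :: "nat \<Rightarrow> real" and \<sigma> :: "'e \<Rightarrow> real" and \<xi> :: "'e \<Rightarrow> nat \<Rightarrow> real"
    and orc :: "'e set set \<Rightarrow> ('e \<Rightarrow> real) \<Rightarrow> 'e set" and \<rho> :: real
    and f ft :: "nat \<Rightarrow> 'e \<Rightarrow> 'e profile \<Rightarrow> real" and \<Phi> :: "'e profile \<Rightarrow> real"
    and A B lam \<mu> \<epsilon> :: real and ps :: "nat \<Rightarrow> 'e profile" and tstop tout :: nat
  defines "F \<equiv> costF \<sigma> \<xi> \<alpha> q"
    and "\<epsilon>\<^sub>1 \<equiv> (1 + \<epsilon>) / (1 - \<epsilon>)"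
  defines "Q \<equiv> 2 * \<epsilon>\<^sub>1 * real N * A / (1 - \<rho> * \<epsilon>\<^sub>1\<^sup>2 * \<mu>)"
  defines "T \<equiv> nat \<lceil>Q * ln (A * B * real N powr (Max (\<alpha> ` {..<q})))\<rceil>"
  assumes inst: "gnd_instance E N P w q \<alpha> \<sigma> \<xi>"
    and orc_spec: "reply_rho_orc E N P \<rho> orc" and rho: "\<rho> \<ge> 1"
    and csm: "is_csm E F N P w f"
    and pot: "potential_fun E N P f \<Phi>"
    and bnd: "bounded_potential E F N P w \<Phi> A B"
    and smooth: "smooth_game E F N P w f lam \<mu>"
    and eps: "0 < \<epsilon>" "\<epsilon> < 1"
    and mu: "\<mu> < 1 / (\<rho> * \<epsilon>\<^sub>1\<^sup>2)"
    and shares: "approx_shares E N P \<epsilon> f ft"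
    and run: "abrd_run E N P w F orc \<rho> \<epsilon>\<^sub>1 ft T ps tstop"
    and out: "abrd_output E F N w ps tstop tout"
  shows "total_cost E F N w (ps tout)
           \<le> 2 * \<rho> * \<epsilon>\<^sub>1\<^sup>2 * lam / (1 - \<rho> * \<epsilon>\<^sub>1\<^sup>2 * \<mu>) * opt_cost E F N P w"
  proof -
  from inst have finE: "finite E" and N1: "N \<ge> 1" and q1: "q \<ge> 1"
    and PE: "\<And>i. i < N \<Longrightarrow> P i \<subseteq> Pow E" and Pne: "\<And>i. i < N \<Longrightarrow> P i \<noteq> {}"
    and w1: "\<And>i e. i < N \<Longrightarrow> e \<in> E \<Longrightarrow> w i e \<ge> 1"
    and al: "\<And>j. j < q \<Longrightarrow> \<alpha> j > 1"
    and sig: "\<And>e. e \<in> E \<Longrightarrow> \<sigma> e \<ge> 0"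
    and xi: "\<And>e j. e \<in> E \<Longrightarrow> j < q \<Longrightarrow> \<xi> e j \<ge> 0"
    and xipos: "\<And>e. e \<in> E \<Longrightarrow> \<exists>j<q. \<xi> e j > 0"
    unfolding gnd_instance_def by auto
  have al0: "\<And>j. j < q \<Longrightarrow> \<alpha> j \<ge> 0" using al by (metis less_imp_le order.strict_trans zero_less_one)
  have F0: "\<And>e. F e 0 = 0" by (simp add: F_def costF_def)
  have Fpos: "\<And>e l. e \<in> E \<Longrightarrow> l \<ge> 1 \<Longrightarrow> F e l > 0"
  proof -
    fix e l assume e: "e \<in> E" and l: "(l::nat) \<ge> 1"
    obtain j where j: "j < q" "\<xi> e j > 0" using xipos[OF e] by auto
    have "0 < \<xi> e j * real l powr \<alpha> j" using j l by simp
    also have "\<dots> \<le> (\<Sum>j<q. \<xi> e j * real l powr \<alpha> j)"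
      by (rule member_le_sum) (use j xi[OF e] in auto)
    finally show "F e l > 0" using l sig[OF e] by (simp add: F_def costF_def)
  qed
  have Fnn: "\<And>e l. e \<in> E \<Longrightarrow> F e l \<ge> 0"
    by (metis F0 Fpos less_eq_real_def less_one not_less)
  have Fmono: "\<And>e l l'. e \<in> E \<Longrightarrow> 1 \<le> l \<Longrightarrow> l \<le> l' \<Longrightarrow> F e l \<le> F e l'"
  proof -
    fix e and l l' :: nat assume e: "e \<in> E" and l: "1 \<le> l" "l \<le> l'"
    have "(\<Sum>j<q. \<xi> e j * real l powr \<alpha> j) \<le> (\<Sum>j<q. \<xi> e j * real l' powr \<alpha> j)"
      by (intro sum_mono mult_left_mono powr_mono2) (use l xi[OF e] al0 in auto)
    thus "F e l \<le> F e l'" using l by (simp add: F_def costF_def)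
  qed
  define C where "C = total_cost E F N w"
  define Ci where "Ci = (\<lambda>i p. indiv_cost E f i p)"
  define Ct where "Ct = (\<lambda>i p. indiv_cost E ft i p)"
  define prof where "prof = profiles N P"
  have upd: "\<And>p i r. p \<in> prof \<Longrightarrow> i < N \<Longrightarrow> r \<in> P i \<Longrightarrow> p(i := r) \<in> prof"
    unfolding prof_def by (rule prof_upd)
  have inP: "\<And>p i. p \<in> prof \<Longrightarrow> i < N \<Longrightarrow> p i \<in> P i"
    unfolding prof_def profiles_def by auto
  have inE: "\<And>p i. p \<in> prof \<Longrightarrow> i < N \<Longrightarrow> p i \<subseteq> E"
    using inP PE by blast
  have csmA: "\<forall>p\<in>profiles N P. \<forall>e\<in>E.
        (\<forall>i<N. f i e p \<ge> 0 \<and> (e \<notin> p i \<longrightarrow> f i e p = 0)) \<and>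
        (\<Sum>i<N. f i e p) = F e (load N w p e)"
    using csm unfolding is_csm_def by (rule conjunct1)
  have csm1: "\<And>p e i. p \<in> prof \<Longrightarrow> e \<in> E \<Longrightarrow> i < N \<Longrightarrow> f i e p \<ge> 0"
    using csmA unfolding prof_def by blast
  have csm2: "\<And>p e. p \<in> prof \<Longrightarrow> e \<in> E \<Longrightarrow> (\<Sum>i<N. f i e p) = F e (load N w p e)"
    using csmA unfolding prof_def by blast
  have Csum: "\<And>p. p \<in> prof \<Longrightarrow> C p = (\<Sum>i<N. Ci i p)"
  proof -
    fix p assume p: "p \<in> prof"
    have "C p = (\<Sum>e\<in>E. \<Sum>i<N. f i e p)"
      unfolding C_def total_cost_def by (rule sum.cong[OF refl]) (simp add: csm2[OF p])
    also have "\<dots> = (\<Sum>i<N. Ci i p)" unfolding Ci_def indiv_cost_def by (rule sum.swap)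
    finally show "C p = (\<Sum>i<N. Ci i p)" .
  qed
  have Cinn: "\<And>i p. p \<in> prof \<Longrightarrow> i < N \<Longrightarrow> Ci i p \<ge> 0"
    unfolding Ci_def indiv_cost_def using csm1 by (auto intro!: sum_nonneg)
  have shA: "\<And>p i e. p \<in> prof \<Longrightarrow> i < N \<Longrightarrow> e \<in> E \<Longrightarrow>
        (1 - \<epsilon>) * f i e p \<le> ft i e p \<and> ft i e p \<le> (1 + \<epsilon>) * f i e p"
    using shares unfolding approx_shares_def prof_def by blast
  have Ct_le: "\<And>i p. p \<in> prof \<Longrightarrow> i < N \<Longrightarrow> Ct i p \<le> (1 + \<epsilon>) * Ci i p"
    unfolding Ct_def Ci_def indiv_cost_def using shA
    by (auto simp: sum_distrib_left intro!: sum_mono)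
  have Ct_ge: "\<And>i p. p \<in> prof \<Longrightarrow> i < N \<Longrightarrow> (1 - \<epsilon>) * Ci i p \<le> Ct i p"
    unfolding Ct_def Ci_def indiv_cost_def using shA
    by (auto simp: sum_distrib_left intro!: sum_mono)
  have finprof: "finite prof"
  proof -
    have "prof \<subseteq> Pi\<^sub>E {..<N} (\<lambda>_. Pow E)" unfolding prof_def profiles_def using PE by (auto simp: PiE_iff)
    moreover have "finite (Pi\<^sub>E {..<N} (\<lambda>_. Pow E))" using finE by (intro finite_PiE) auto
    ultimately show ?thesis by (rule finite_subset)
  qed
  have profne: "prof \<noteq> {}" unfolding prof_def profiles_def using Pne by (simp add: PiE_eq_empty_iff)
  have Cnn: "\<And>p. C p \<ge> 0" unfolding C_def total_cost_def using Fnn by (auto intro!: sum_nonneg)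
  have optC: "opt_cost E F N P w = Min (C ` prof)" by (simp add: opt_cost_def C_def prof_def)
  have "Min (C ` prof) \<in> C ` prof" using finprof profne by simp
  then obtain pst where pst: "pst \<in> prof" "C pst = opt_cost E F N P w" unfolding optC by force
  have Copt: "\<And>p. p \<in> prof \<Longrightarrow> C pst \<le> C p"
    using pst finprof unfolding opt_cost_def C_def prof_def by auto
  from smooth have lam0: "lam > 0" and mu0: "0 < \<mu>" and mu1: "\<mu> < 1"
    and smo: "\<And>p p'. p \<in> prof \<Longrightarrow> p' \<in> prof \<Longrightarrow>
        (\<Sum>i<N. Ci i (p(i := p' i))) \<le> lam * C p' + \<mu> * C p"
    unfolding smooth_game_def prof_def Ci_def C_def by auto
  from bnd have A1: "A \<ge> 1" and B1: "B \<ge> 1"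
    and PhiA: "\<And>p. p \<in> prof \<Longrightarrow> \<Phi> p / A \<le> C p"
    and PhiB: "\<And>p. p \<in> prof \<Longrightarrow> C p \<le> B * \<Phi> p"
    unfolding bounded_potential_def prof_def C_def by auto
  from pot have Phipos: "\<And>p. p \<in> prof \<Longrightarrow> \<Phi> p > 0"
    and Phidiff: "\<And>p p' i. p \<in> prof \<Longrightarrow> p' \<in> prof \<Longrightarrow> i < N \<Longrightarrow> (\<forall>k<N. k \<noteq> i \<longrightarrow> p' k = p k) \<Longrightarrow>
        \<Phi> p' - \<Phi> p = Ci i p' - Ci i p"
    unfolding potential_fun_def prof_def Ci_def by auto
  have e1gt: "\<epsilon>\<^sub>1 > 1" using eps unfolding \<epsilon>\<^sub>1_def by (simp add: field_simps)
  have e1id2: "\<epsilon>\<^sub>1 * (1 - \<epsilon>) = 1 + \<epsilon>"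
    using eps unfolding \<epsilon>\<^sub>1_def by (simp add: field_simps)
  have e1id: "\<epsilon>\<^sub>1 * (1 + \<epsilon>) = (1 - \<epsilon>) * \<epsilon>\<^sub>1\<^sup>2"
  proof -
    have "(1 - \<epsilon>) * \<epsilon>\<^sub>1\<^sup>2 = (\<epsilon>\<^sub>1 * (1 - \<epsilon>)) * \<epsilon>\<^sub>1" by (simp add: power2_eq_square mult_ac)
    thus ?thesis using e1id2 by (simp add: mult.commute)
  qed
  define kap where "kap = 1 - \<rho> * \<epsilon>\<^sub>1\<^sup>2 * \<mu>"
  have rhoe: "\<rho> * \<epsilon>\<^sub>1\<^sup>2 > 0" using rho e1gt by simp
  have kap0: "kap > 0"
  proof -
    have "\<rho> * \<epsilon>\<^sub>1\<^sup>2 * \<mu> < \<rho> * \<epsilon>\<^sub>1\<^sup>2 * (1 / (\<rho> * \<epsilon>\<^sub>1\<^sup>2))"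
      using mu rhoe by (intro mult_strict_left_mono) auto
    moreover have "\<rho> * \<epsilon>\<^sub>1\<^sup>2 * (1 / (\<rho> * \<epsilon>\<^sub>1\<^sup>2)) = 1" using rho e1gt by simp
    ultimately show ?thesis unfolding kap_def by linarith
  qed
  have Qeq: "Q = 2 * \<epsilon>\<^sub>1 * real N * A / kap" unfolding Q_def kap_def ..
  have Q0: "Q > 0" unfolding Qeq using e1gt N1 A1 kap0 by simp
  define Bd where "Bd = 2 * \<rho> * \<epsilon>\<^sub>1\<^sup>2 * lam / kap * C pst"
  have Bd0: "Bd \<ge> 0" unfolding Bd_def using rho lam0 kap0 Cnn[of pst] by simp
  have key: "\<rho> * \<epsilon>\<^sub>1\<^sup>2 * lam * C pst = kap * Bd / 2"
    unfolding Bd_def using kap0 by (simp add: field_simps)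
  have step: "\<And>p p' stop. p \<in> prof \<Longrightarrow> abrd_step E N P \<rho> \<epsilon>\<^sub>1 ft p p' stop \<Longrightarrow>
      p' \<in> prof \<and> (stop \<longrightarrow> C p \<le> Bd) \<and> (C p > Bd \<longrightarrow> \<Phi> p' \<le> (1 - 1 / Q) * \<Phi> p)"
  proof -
    fix p p' stop assume p: "p \<in> prof" and st: "abrd_step E N P \<rho> \<epsilon>\<^sub>1 ft p p' stop"
    from st obtain br where br: "\<forall>i<N. br i \<in> P i \<and> (\<forall>r\<in>P i. Ct i (p(i := br i)) \<le> \<rho> * Ct i (p(i := r)))"
      and rest: "let \<delta> = (\<lambda>i. Ct i p - \<epsilon>\<^sub>1 * Ct i (p(i := br i))) in
          (if (\<forall>i<N. \<delta> i \<le> 0) then p' = p \<and> stop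
           else \<not> stop \<and>
             (\<exists>j<N. \<delta> j > 0 \<and> \<delta> j \<ge> (\<Sum>i<N. \<delta> i) / real N \<and> p' = p(j := br j)))"
      unfolding abrd_step_def Ct_def by blast
    define \<delta> where "\<delta> = (\<lambda>i. Ct i p - \<epsilon>\<^sub>1 * Ct i (p(i := br i)))"
    have rest': "if (\<forall>i<N. \<delta> i \<le> 0) then p' = p \<and> stop
           else \<not> stop \<and> (\<exists>j<N. \<delta> j > 0 \<and> \<delta> j \<ge> (\<Sum>i<N. \<delta> i) / real N \<and> p' = p(j := br j))"
      using rest unfolding \<delta>_def Let_def .
    have dlb: "\<delta> i \<ge> (1 - \<epsilon>) * (Ci i p - \<rho> * \<epsilon>\<^sub>1\<^sup>2 * Ci i (p(i := pst i)))" if i: "i < N" for i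
    proof -
      define X where "X = Ci i (p(i := pst i))"
      have pi: "p(i := pst i) \<in> prof" by (rule upd[OF p i inP[OF pst(1) i]])
      have "Ct i (p(i := br i)) \<le> \<rho> * Ct i (p(i := pst i))" using br i inP[OF pst(1) i] by auto
      also have "\<dots> \<le> \<rho> * ((1 + \<epsilon>) * X)" unfolding X_def using Ct_le[OF pi i] rho by (intro mult_left_mono) auto
      finally have a: "Ct i (p(i := br i)) \<le> \<rho> * ((1 + \<epsilon>) * X)" .
      have "\<epsilon>\<^sub>1 * Ct i (p(i := br i)) \<le> \<epsilon>\<^sub>1 * (\<rho> * ((1 + \<epsilon>) * X))"
        using a e1gt by (intro mult_left_mono) auto
      also have "\<dots> = (\<epsilon>\<^sub>1 * (1 + \<epsilon>)) * (\<rho> * X)" by (simp add: mult_ac)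
      also have "\<dots> = ((1 - \<epsilon>) * \<epsilon>\<^sub>1\<^sup>2) * (\<rho> * X)" by (simp only: e1id)
      also have "\<dots> = (1 - \<epsilon>) * (\<rho> * \<epsilon>\<^sub>1\<^sup>2 * X)" by (simp add: mult_ac)
      finally have b: "\<epsilon>\<^sub>1 * Ct i (p(i := br i)) \<le> (1 - \<epsilon>) * (\<rho> * \<epsilon>\<^sub>1\<^sup>2 * X)" .
      have c: "(1 - \<epsilon>) * Ci i p \<le> Ct i p" by (rule Ct_ge[OF p i])
      have "(1 - \<epsilon>) * (Ci i p - \<rho> * \<epsilon>\<^sub>1\<^sup>2 * X) = (1 - \<epsilon>) * Ci i p - (1 - \<epsilon>) * (\<rho> * \<epsilon>\<^sub>1\<^sup>2 * X)"
        by (simp add: right_diff_distrib)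
      thus ?thesis using b c unfolding \<delta>_def X_def by linarith
    qed
    have Dlb: "(\<Sum>i<N. \<delta> i) \<ge> (1 - \<epsilon>) * (C p - \<rho> * \<epsilon>\<^sub>1\<^sup>2 * (lam * C pst + \<mu> * C p))"
    proof -
      have "(\<Sum>i<N. \<delta> i) \<ge> (\<Sum>i<N. (1 - \<epsilon>) * (Ci i p - \<rho> * \<epsilon>\<^sub>1\<^sup>2 * Ci i (p(i := pst i))))"
        by (rule sum_mono) (rule dlb, simp)
      moreover have "(\<Sum>i<N. (1 - \<epsilon>) * (Ci i p - \<rho> * \<epsilon>\<^sub>1\<^sup>2 * Ci i (p(i := pst i))))
          = (1 - \<epsilon>) * (C p - \<rho> * \<epsilon>\<^sub>1\<^sup>2 * (\<Sum>i<N. Ci i (p(i := pst i))))"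
        unfolding Csum[OF p] by (simp add: sum_distrib_left sum_subtractf right_diff_distrib mult.assoc)
      moreover have "(1 - \<epsilon>) * (C p - \<rho> * \<epsilon>\<^sub>1\<^sup>2 * (\<Sum>i<N. Ci i (p(i := pst i))))
          \<ge> (1 - \<epsilon>) * (C p - \<rho> * \<epsilon>\<^sub>1\<^sup>2 * (lam * C pst + \<mu> * C p))"
        using smo[OF p pst(1)] rhoe eps by (intro mult_left_mono) (auto intro: mult_left_mono)
      ultimately show ?thesis by linarith
    qed
    have Dpos: "(\<Sum>i<N. \<delta> i) \<ge> (1 - \<epsilon>) * kap * C p / 2" if gt: "C p > Bd"
    proof -
      have "\<rho> * \<epsilon>\<^sub>1\<^sup>2 * (lam * C pst + \<mu> * C p) = \<rho> * \<epsilon>\<^sub>1\<^sup>2 * lam * C pst + (1 - kap) * C p"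
        by (simp add: kap_def algebra_simps)
      hence "C p - \<rho> * \<epsilon>\<^sub>1\<^sup>2 * (lam * C pst + \<mu> * C p) = kap * C p - kap * Bd / 2"
        using key by (simp add: algebra_simps)
      also have "\<dots> \<ge> kap * C p / 2" using gt kap0 by (simp add: field_simps)
      finally have "C p - \<rho> * \<epsilon>\<^sub>1\<^sup>2 * (lam * C pst + \<mu> * C p) \<ge> kap * C p / 2" .
      hence "(1 - \<epsilon>) * (C p - \<rho> * \<epsilon>\<^sub>1\<^sup>2 * (lam * C pst + \<mu> * C p)) \<ge> (1 - \<epsilon>) * (kap * C p / 2)"
        using eps by (intro mult_left_mono) auto
      thus ?thesis using Dlb by simp
    qed
    have Dpos': "(\<Sum>i<N. \<delta> i) > 0" if gt: "C p > Bd"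
    proof -
      have "(1 - \<epsilon>) * kap * C p / 2 > 0" using eps kap0 gt Bd0 by simp
      thus ?thesis using Dpos[OF gt] by linarith
    qed
    show "p' \<in> prof \<and> (stop \<longrightarrow> C p \<le> Bd) \<and> (C p > Bd \<longrightarrow> \<Phi> p' \<le> (1 - 1 / Q) * \<Phi> p)"
    proof (intro conjI impI)
      show "p' \<in> prof" using rest' p upd br by (auto split: if_splits)
    next
      assume stop
      hence "\<forall>i<N. \<delta> i \<le> 0" using rest' by (auto split: if_splits)
      hence "(\<Sum>i<N. \<delta> i) \<le> 0" by (intro sum_nonpos) auto
      thus "C p \<le> Bd" using Dpos' by force
    next
      assume gt: "C p > Bd"
      have "\<not> (\<forall>i<N. \<delta> i \<le> 0)"
      proof
        assume "\<forall>i<N. \<delta> i \<le> 0"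
        hence "(\<Sum>i<N. \<delta> i) \<le> 0" by (intro sum_nonpos) auto
        thus False using Dpos'[OF gt] by linarith
      qed
      then obtain j where j: "j < N" "\<delta> j > 0" "\<delta> j \<ge> (\<Sum>i<N. \<delta> i) / real N" and p'eq: "p' = p(j := br j)"
        using rest' by (auto split: if_splits)
      have pp: "p' \<in> prof" unfolding p'eq using upd p j br by auto
      have dP: "\<Phi> p' - \<Phi> p = Ci j p' - Ci j p"
        by (rule Phidiff[OF p pp j(1)]) (simp add: p'eq)
      have "\<epsilon>\<^sub>1 * ((1 - \<epsilon>) * Ci j p') \<le> \<epsilon>\<^sub>1 * Ct j p'"
        using Ct_ge[OF pp j(1)] e1gt by (intro mult_left_mono) auto
      hence "(1 + \<epsilon>) * Ci j p' \<le> \<epsilon>\<^sub>1 * Ct j p'" using e1id2 by (simp add: mult.assoc[symmetric])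
      moreover have "\<Phi> p - \<Phi> p' = Ci j p - Ci j p'" using dP by linarith
      hence h: "(1 + \<epsilon>) * (\<Phi> p - \<Phi> p') = (1 + \<epsilon>) * Ci j p - (1 + \<epsilon>) * Ci j p'"
        by (simp add: right_diff_distrib)
      moreover have "\<delta> j = Ct j p - \<epsilon>\<^sub>1 * Ct j p'" by (simp add: \<delta>_def p'eq)
      ultimately have dj: "\<delta> j \<le> (1 + \<epsilon>) * (\<Phi> p - \<Phi> p')"
        using Ct_le[OF p j(1)] by linarith
      have "(1 - \<epsilon>) * kap * C p / 2 / real N \<le> (\<Sum>i<N. \<delta> i) / real N"
        using Dpos[OF gt] N1 by (intro divide_right_mono) auto
      also have "\<dots> \<le> (1 + \<epsilon>) * (\<Phi> p - \<Phi> p')" using j(3) dj by linarith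
      finally have e: "(1 - \<epsilon>) * kap * C p / 2 / real N \<le> (1 + \<epsilon>) * (\<Phi> p - \<Phi> p')" .
      have "(1 - \<epsilon>) * kap * (\<Phi> p / A) / 2 / real N \<le> (1 - \<epsilon>) * kap * C p / 2 / real N"
        using PhiA[OF p] eps kap0 N1 by (intro divide_right_mono mult_left_mono) auto
      with e have f: "(1 - \<epsilon>) * kap * (\<Phi> p / A) / 2 / real N \<le> (1 + \<epsilon>) * (\<Phi> p - \<Phi> p')" by linarith
      have g: "\<Phi> p / Q = (1 - \<epsilon>) * kap * (\<Phi> p / A) / 2 / real N / (1 + \<epsilon>)"
        unfolding Qeq \<epsilon>\<^sub>1_def using eps kap0 N1 A1 by (simp add: field_simps)
      define X where "X = (1 - \<epsilon>) * kap * (\<Phi> p / A) / 2 / real N"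
      have f': "X \<le> (\<Phi> p - \<Phi> p') * (1 + \<epsilon>)" using f unfolding X_def by (simp add: mult.commute)
      have "X / (1 + \<epsilon>) \<le> \<Phi> p - \<Phi> p'"
        using f' eps by (subst pos_divide_le_eq) auto
      hence "\<Phi> p / Q \<le> \<Phi> p - \<Phi> p'" unfolding g X_def .
      thus "\<Phi> p' \<le> (1 - 1 / Q) * \<Phi> p" by (simp add: left_diff_distrib)
    qed
  qed
  define M where "M = Max (\<alpha> ` {..<q})"
  have Mge: "\<And>j. j < q \<Longrightarrow> \<alpha> j \<le> M" unfolding M_def by (intro Max_ge) auto
  have M1: "M > 1" using al[of 0] Mge[of 0] q1 by force
  from run have R0: "ps 0 = (\<lambda>i\<in>{..<N}. orc (P i) (\<lambda>e. F e (w i e)))" and Rle: "tstop \<le> T"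
    and Rstep: "\<And>t. t \<in> {1..tstop} \<Longrightarrow> \<exists>stop. abrd_step E N P \<rho> \<epsilon>\<^sub>1 ft (ps (t - 1)) (ps t) stop \<and>
         (stop \<longrightarrow> t = tstop) \<and> (t = tstop \<and> tstop < T \<longrightarrow> stop)"
    and Rtl: "tstop < T \<Longrightarrow> tstop \<ge> 1"
    unfolding abrd_run_def by auto
  define \<tau> where "\<tau> = (\<lambda>i e. F e (w i e))"
  have orc0: "ps 0 i \<in> P i \<and> (\<forall>r'\<in>P i. sum (\<tau> i) (ps 0 i) \<le> \<rho> * sum (\<tau> i) r')" if i: "i < N" for i
  proof -
    have "\<forall>e\<in>E. (\<lambda>e. F e (w i e)) e > 0" using Fpos w1 i by auto
    then show ?thesis using orc_spec i R0 unfolding reply_rho_orc_def \<tau>_def by auto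
  qed
  have p0: "ps 0 \<in> prof" unfolding prof_def profiles_def R0
    using orc0 R0 by (auto simp: restrict_PiE_iff)
  have psin: "t \<le> tstop \<Longrightarrow> ps t \<in> prof" for t
  proof (induction t)
    case 0 show ?case by (rule p0)
  next
    case (Suc t)
    then obtain stop where st: "abrd_step E N P \<rho> \<epsilon>\<^sub>1 ft (ps t) (ps (Suc t)) stop"
      using Rstep[of "Suc t"] by auto
    show ?case using step[OF Suc.IH st] Suc.prems by simp
  qed
  have Nge: "real N powr (M - 1) \<ge> 1" using N1 M1 by (intro ge_one_powr_ge_zero) auto
  have a: "F e (load N w (ps 0) e) \<le> real N powr (M - 1) * (\<Sum>i\<in>{i. i < N \<and> e \<in> ps 0 i}. \<tau> i e)"
    if e: "e \<in> E" for e
  proof -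
    define S where "S = {i. i < N \<and> e \<in> ps 0 i}"
    have SN: "S \<subseteq> {..<N}" unfolding S_def by auto
    have finS: "finite S" using SN finite_subset by blast
    have cardS: "card S \<le> N" using card_mono[OF _ SN] by simp
    have ld: "load N w (ps 0) e = (\<Sum>i\<in>S. w i e)" unfolding load_def S_def ..
    show ?thesis
    proof (cases "S = {}")
      case True
      thus ?thesis using ld F0 unfolding S_def[symmetric] by simp
    next
      case False
      then obtain i0 where i0: "i0 \<in> S" by auto
      have wS: "\<And>i. i \<in> S \<Longrightarrow> w i e \<ge> 1" using w1 e unfolding S_def by auto
      have "w i0 e \<le> (\<Sum>i\<in>S. w i e)" by (rule member_le_sum) (use i0 finS in auto)
      hence ld1: "load N w (ps 0) e \<ge> 1" using wS[OF i0] ld by simp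
      have kS: "real (card S) \<ge> 1" using False finS by (simp add: Suc_le_eq card_gt_0_iff)
      have pm: "real (load N w (ps 0) e) powr \<alpha> j \<le> real N powr (M - 1) * (\<Sum>i\<in>S. real (w i e) powr \<alpha> j)"
        if j: "j < q" for j
      proof -
        have "real (load N w (ps 0) e) powr \<alpha> j = (\<Sum>i\<in>S. real (w i e)) powr \<alpha> j" by (simp add: ld)
        also have "\<dots> \<le> real (card S) powr (\<alpha> j - 1) * (\<Sum>i\<in>S. real (w i e) powr \<alpha> j)"
          by (rule power_mean_aux[OF finS False]) (use wS al[OF j] in \<open>force+\<close>)
        also have "\<dots> \<le> real N powr (M - 1) * (\<Sum>i\<in>S. real (w i e) powr \<alpha> j)"
        proof (rule mult_right_mono)
          have "real (card S) powr (\<alpha> j - 1) \<le> real N powr (\<alpha> j - 1)"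
            using cardS al[OF j] by (intro powr_mono2) auto
          also have "\<dots> \<le> real N powr (M - 1)" using Mge[OF j] N1 by (intro powr_mono) auto
          finally show "real (card S) powr (\<alpha> j - 1) \<le> real N powr (M - 1)" .
        qed (auto intro: sum_nonneg)
        finally show ?thesis .
      qed
      have "(\<Sum>i\<in>S. \<tau> i e) = (\<Sum>i\<in>S. \<sigma> e + (\<Sum>j<q. \<xi> e j * real (w i e) powr \<alpha> j))"
      proof (rule sum.cong[OF refl])
        fix i assume "i \<in> S"
        hence "w i e \<noteq> 0" using wS by fastforce
        thus "\<tau> i e = \<sigma> e + (\<Sum>j<q. \<xi> e j * real (w i e) powr \<alpha> j)" by (simp add: \<tau>_def F_def costF_def)
      qed
      also have "\<dots> = real (card S) * \<sigma> e + (\<Sum>i\<in>S. \<Sum>j<q. \<xi> e j * real (w i e) powr \<alpha> j)"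
        by (simp add: sum.distrib)
      also have "\<dots> = real (card S) * \<sigma> e + (\<Sum>j<q. \<xi> e j * (\<Sum>i\<in>S. real (w i e) powr \<alpha> j))"
        by (simp add: sum.swap[of _ S] sum_distrib_left)
      finally have rhs: "(\<Sum>i\<in>S. \<tau> i e) = real (card S) * \<sigma> e + (\<Sum>j<q. \<xi> e j * (\<Sum>i\<in>S. real (w i e) powr \<alpha> j))" .
      have s1: "\<sigma> e \<le> real N powr (M - 1) * (real (card S) * \<sigma> e)"
      proof -
        have "1 * \<sigma> e \<le> (real N powr (M - 1) * real (card S)) * \<sigma> e"
        proof (rule mult_right_mono)
          have "1 * 1 \<le> real N powr (M - 1) * real (card S)"
            using Nge kS by (intro mult_mono) auto
          thus "1 \<le> real N powr (M - 1) * real (card S)" by simp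
        qed (use sig[OF e] in auto)
        thus ?thesis by (simp add: mult.assoc)
      qed
      have s2: "(\<Sum>j<q. \<xi> e j * real (load N w (ps 0) e) powr \<alpha> j)
          \<le> real N powr (M - 1) * (\<Sum>j<q. \<xi> e j * (\<Sum>i\<in>S. real (w i e) powr \<alpha> j))"
      proof -
        have "(\<Sum>j<q. \<xi> e j * real (load N w (ps 0) e) powr \<alpha> j)
            \<le> (\<Sum>j<q. \<xi> e j * (real N powr (M - 1) * (\<Sum>i\<in>S. real (w i e) powr \<alpha> j)))"
          by (intro sum_mono mult_left_mono pm) (use xi[OF e] in auto)
        thus ?thesis by (simp add: sum_distrib_left mult_ac)
      qed
      have "F e (load N w (ps 0) e) = \<sigma> e + (\<Sum>j<q. \<xi> e j * real (load N w (ps 0) e) powr \<alpha> j)"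
        using ld1 by (simp add: F_def costF_def)
      also have "\<dots> \<le> real N powr (M - 1) * (real (card S) * \<sigma> e) +
          real N powr (M - 1) * (\<Sum>j<q. \<xi> e j * (\<Sum>i\<in>S. real (w i e) powr \<alpha> j))"
        using s1 s2 by linarith
      also have "\<dots> = real N powr (M - 1) * (\<Sum>i\<in>S. \<tau> i e)" unfolding rhs by (simp add: distrib_left)
      finally show ?thesis unfolding S_def .
    qed
  qed
  have b: "(\<Sum>i\<in>{i. i < N \<and> e \<in> pst i}. \<tau> i e) \<le> real N * F e (load N w pst e)" if e: "e \<in> E" for e
  proof -
    define S where "S = {i. i < N \<and> e \<in> pst i}"
    have SN: "S \<subseteq> {..<N}" unfolding S_def by auto
    have finS: "finite S" using SN finite_subset by blast
    have cardS: "card S \<le> N" using card_mono[OF _ SN] by simp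
    have "(\<Sum>i\<in>S. \<tau> i e) \<le> real (card S) * F e (load N w pst e)"
    proof (rule sum_bounded_above)
      fix i assume i: "i \<in> S"
      have "w i e \<le> (\<Sum>i\<in>S. w i e)" by (rule member_le_sum) (use i finS in auto)
      hence "w i e \<le> load N w pst e" unfolding load_def S_def .
      moreover have "w i e \<ge> 1" using w1 e i unfolding S_def by auto
      ultimately show "\<tau> i e \<le> F e (load N w pst e)" unfolding \<tau>_def using Fmono[OF e] by auto
    qed
    also have "\<dots> \<le> real N * F e (load N w pst e)"
      using cardS Fnn[OF e] by (intro mult_right_mono) auto
    finally show ?thesis unfolding S_def .
  qed
  have init: "C (ps 0) \<le> \<rho> * real N powr M * C pst"
  proof -
    have "C (ps 0) \<le> (\<Sum>e\<in>E. real N powr (M - 1) * (\<Sum>i\<in>{i. i < N \<and> e \<in> ps 0 i}. \<tau> i e))"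
      unfolding C_def total_cost_def by (intro sum_mono a)
    also have "\<dots> = real N powr (M - 1) * (\<Sum>i<N. sum (\<tau> i) (ps 0 i))"
      by (simp add: sum_distrib_left[symmetric] sum_swap_users[OF finE inE[OF p0]])
    also have "\<dots> \<le> real N powr (M - 1) * (\<Sum>i<N. \<rho> * sum (\<tau> i) (pst i))"
      using Nge orc0 inP[OF pst(1)] by (intro mult_left_mono sum_mono) auto
    also have "\<dots> = real N powr (M - 1) * \<rho> * (\<Sum>e\<in>E. \<Sum>i\<in>{i. i < N \<and> e \<in> pst i}. \<tau> i e)"
      by (simp add: sum_distrib_left[symmetric] sum_swap_users[OF finE inE[OF pst(1)]] mult.assoc)
    also have "\<dots> \<le> real N powr (M - 1) * \<rho> * (\<Sum>e\<in>E. real N * F e (load N w pst e))"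
      using Nge rho by (intro mult_left_mono sum_mono b) auto
    also have "\<dots> = (real N powr (M - 1) * real N) * \<rho> * C pst"
      by (simp add: C_def total_cost_def sum_distrib_left mult_ac)
    also have "real N powr (M - 1) * real N = real N powr M"
      using N1 by (simp add: powr_diff)
    finally show ?thesis by (simp add: mult_ac)
  qed
  have BdC: "\<rho> * C pst \<le> Bd"
  proof (cases "C pst = 0")
    case True thus ?thesis unfolding Bd_def by simp
  next
    case False
    hence Cp: "C pst > 0" using Cnn[of pst] by linarith
    have "C pst \<le> lam * C pst + \<mu> * C pst" using smo[OF pst(1) pst(1)] Csum[OF pst(1)] by simp
    hence "1 * C pst \<le> (lam + \<mu>) * C pst" by (simp add: distrib_right)
    hence lm: "1 \<le> lam + \<mu>" using Cp by (simp only: mult_le_cancel_right_pos)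
    have e2: "\<epsilon>\<^sub>1\<^sup>2 \<ge> 1" using e1gt by (intro one_le_power) auto
    have r1: "\<epsilon>\<^sub>1\<^sup>2 * \<mu> \<le> \<rho> * \<epsilon>\<^sub>1\<^sup>2 * \<mu>"
    proof -
      have "1 * (\<epsilon>\<^sub>1\<^sup>2 * \<mu>) \<le> \<rho> * (\<epsilon>\<^sub>1\<^sup>2 * \<mu>)" using rho e2 mu0 by (intro mult_right_mono) auto
      thus ?thesis by (simp add: mult.assoc)
    qed
    have r2: "\<epsilon>\<^sub>1\<^sup>2 * \<mu> \<le> \<epsilon>\<^sub>1\<^sup>2" using mu1 e2 by (intro mult_left_le) auto
    have r3: "\<epsilon>\<^sub>1\<^sup>2 * (1 - \<mu>) \<le> \<epsilon>\<^sub>1\<^sup>2 * lam" using lm e2 by (intro mult_left_mono) auto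
    have kl: "\<rho> * kap \<le> \<rho> * (2 * \<epsilon>\<^sub>1\<^sup>2 * lam)"
    proof (rule mult_left_mono)
      show "kap \<le> 2 * \<epsilon>\<^sub>1\<^sup>2 * lam" using r1 r2 r3 e2 unfolding kap_def by (simp add: algebra_simps)
    qed (use rho in auto)
    have "\<rho> \<le> 2 * \<rho> * \<epsilon>\<^sub>1\<^sup>2 * lam / kap"
      using kl kap0 by (simp add: pos_le_divide_eq mult_ac)
    thus ?thesis unfolding Bd_def using Cp by (intro mult_right_mono) auto
  qed
  have outle: "\<And>t. t \<le> tstop \<Longrightarrow> C (ps tout) \<le> C (ps t)"
    using out unfolding abrd_output_def C_def by auto
  have goal_eq: "2 * \<rho> * \<epsilon>\<^sub>1\<^sup>2 * lam / (1 - \<rho> * \<epsilon>\<^sub>1\<^sup>2 * \<mu>) * opt_cost E F N P w = Bd"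
    unfolding Bd_def kap_def pst(2) ..
  have "C (ps tout) \<le> Bd"
  proof (cases "\<exists>t\<le>tstop. C (ps t) \<le> Bd")
    case True then show ?thesis using outle by (meson order_trans)
  next
    case False
    hence gt: "\<And>t. t \<le> tstop \<Longrightarrow> C (ps t) > Bd" by force
    have tT: "tstop = T"
    proof (rule ccontr)
      assume "tstop \<noteq> T" hence lt: "tstop < T" using Rle by simp
      hence t1: "tstop \<ge> 1" by (rule Rtl)
      obtain stop where st: "abrd_step E N P \<rho> \<epsilon>\<^sub>1 ft (ps (tstop - 1)) (ps tstop) stop"
        and sp: "tstop = tstop \<and> tstop < T \<longrightarrow> stop"
        using Rstep[of tstop] t1 by auto
      have stop using sp lt by simp
      hence "C (ps (tstop - 1)) \<le> Bd" using step[OF psin[of "tstop - 1"] st] by simp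
      thus False using gt[of "tstop - 1"] by simp
    qed
    have dec: "\<Phi> (ps t) \<le> (1 - 1 / Q) * \<Phi> (ps (t - 1))" if t: "t \<in> {1..T}" for t
    proof -
      obtain stop where st: "abrd_step E N P \<rho> \<epsilon>\<^sub>1 ft (ps (t - 1)) (ps t) stop"
        using Rstep[of t] t tT by auto
      have tl: "t - 1 \<le> tstop" using t tT by (simp del: One_nat_def) arith
      hence "C (ps (t - 1)) > Bd" by (rule gt)
      thus ?thesis using step[OF psin[OF tl] st] by blast
    qed
    have r0: "1 - 1 / Q \<ge> 0" if T1: "T \<ge> 1"
    proof (rule ccontr)
      assume "\<not> 1 - 1 / Q \<ge> 0"
      hence "(1 - 1 / Q) * \<Phi> (ps 0) \<le> 0" using Phipos[OF p0] by (intro mult_nonpos_nonneg) auto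
      moreover have "\<Phi> (ps 1) > 0" using Phipos psin[of 1] T1 tT by simp
      ultimately show False using dec[of 1] T1 by simp
    qed
    have pw: "t \<le> T \<Longrightarrow> \<Phi> (ps t) \<le> (1 - 1 / Q) ^ t * \<Phi> (ps 0)" for t
    proof (induction t)
      case 0 show ?case by simp
    next
      case (Suc t)
      have "\<Phi> (ps (Suc t)) \<le> (1 - 1 / Q) * \<Phi> (ps t)" using dec[of "Suc t"] Suc.prems by simp
      also have "\<dots> \<le> (1 - 1 / Q) * ((1 - 1 / Q) ^ t * \<Phi> (ps 0))"
        using Suc r0 by (intro mult_left_mono) auto
      finally show ?case by (simp add: mult.assoc)
    qed
    define x where "x = A * B * real N powr M"
    have x1: "x \<ge> 1"
    proof -
      have "real N powr M \<ge> 1" using N1 M1 by (intro ge_one_powr_ge_zero) auto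
      moreover have "A * B \<ge> 1" using A1 B1 by (metis mult_mono' mult_1 order_trans zero_le_one)
      ultimately show ?thesis unfolding x_def by (metis mult_mono' mult_1 order_trans zero_le_one)
    qed
    have Teq: "T = nat \<lceil>Q * ln x\<rceil>" unfolding T_def x_def M_def ..
    have lnT: "ln x \<le> real T / Q"
    proof -
      have "Q * ln x \<le> real T" unfolding Teq by (rule real_nat_ceiling_ge)
      thus ?thesis using Q0 by (simp add: pos_le_divide_eq mult.commute)
    qed
    have ex: "(1 - 1 / Q) ^ T \<le> exp (- (real T / Q))"
    proof (cases "T = 0")
      case True thus ?thesis by simp
    next
      case False
      hence "(1 - 1 / Q) ^ T \<le> exp (- (1 / Q)) ^ T"
        using r0 by (intro power_mono) (use exp_ge_add_one_self[of "- (1 / Q)"] in auto)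
      also have "\<dots> = exp (- (real T / Q))" by (simp add: exp_of_nat_mult[symmetric])
      finally show ?thesis .
    qed
    have ex2: "exp (- (real T / Q)) \<le> 1 / x"
    proof -
      have "exp (- (real T / Q)) \<le> exp (- ln x)" using lnT by simp
      also have "\<dots> = 1 / x" using x1 by (simp add: exp_minus inverse_eq_divide)
      finally show ?thesis .
    qed
    have pT: "ps T \<in> prof" using psin tT by simp
    have "C (ps T) \<le> B * \<Phi> (ps T)" by (rule PhiB[OF pT])
    also have "\<dots> \<le> B * ((1 - 1 / Q) ^ T * \<Phi> (ps 0))" using pw[of T] B1 by (intro mult_left_mono) auto
    also have "\<dots> \<le> B * ((1 / x) * (A * C (ps 0)))"
    proof (intro mult_left_mono mult_mono)
      show "(1 - 1 / Q) ^ T \<le> 1 / x" using ex ex2 by linarith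
      show "\<Phi> (ps 0) \<le> A * C (ps 0)" using PhiA[OF p0] A1 by (simp add: divide_le_eq mult.commute)
      show "0 \<le> 1 / x" using x1 by simp
      show "0 \<le> \<Phi> (ps 0)" using Phipos[OF p0] by simp
      show "0 \<le> B" using B1 by simp
    qed
    also have "\<dots> \<le> B * ((1 / x) * (A * (\<rho> * real N powr M * C pst)))"
      using init A1 B1 x1 by (intro mult_left_mono) auto
    also have "\<dots> = \<rho> * C pst"
    proof -
      have "B * ((1 / x) * (A * (\<rho> * real N powr M * C pst))) = (x / x) * (\<rho> * C pst)"
        unfolding x_def by (simp add: mult_ac)
      thus ?thesis using x1 by simp
    qed
    also have "\<dots> \<le> Bd" by (rule BdC)
    finally have "C (ps T) \<le> Bd" .
    thus ?thesis using gt[of T] tT by simp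
  qed
  thus ?thesis unfolding goal_eq[symmetric] C_def .
qed

end
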